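(* Assume the vector variational inequality defined by $F$ and $K$ is monotone and that $\mathrm{Sol}^w(F,K)$ is bounded and nonempty. Then (a) $\mathrm{Sol}^w(F,K)$ is connected; and (b) the domain of the basic multifunction is all of $\Delta$, i.e., $\mathrm{Sol}(F_\xi,K)\neq\emptyset$ for every $\xi\in\Delta$.
   Context: Let $K\subset\mathbb{R}^n$ be a nonempty closed convex set and $F_1,\dots,F_m:K\to\mathbb{R}^n$ continuous functions; write $F=(F_1,\dots,F_m)$ and $F(x)(u)=(\langle F_1(x),u\rangle,\dots,\langle F_m(x),u\rangle)$. The problem is monotone if each $F_l$ is monotone on $K$: $\langle F_l(y)-F_l(x),y-x\rangle\ge0$ for all $x,y\in K$. Let $\Delta=\{\xi\in\mathbb{R}^m_+:\sum_l\xi_l=1\}$ and $F_\xi=\sum_l\xi_lF_l$. For $G:K\to\mathbb{R}^n$, $\mathrm{Sol}(G,K)=\{x\in K:\langle G(x),y-x\rangle\ge0\ \forall y\in K\}$. The basic multifunction is $S:\Delta\rightrightarrows\mathbb{R}^n$, $S(\xi)=\mathrm{Sol}(F_\xi,K)$. The weak Pareto solution set $\mathrm{Sol}^w(F,K)$ is the set of $x\in K$ such that $F(x)(x-y)\notin\operatorname{int}\mathbb{R}^m_+$ for all $y\in K$. *)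

theory Defs
  imports "HOL-Analysis.Analysis"
begin

definition Sol :: "('a::real_inner \<Rightarrow> 'a) \<Rightarrow> 'a set \<Rightarrow> 'a set" where
  "Sol G K = {x \<in> K. \<forall>y\<in>K. inner (G x) (y - x) \<ge> 0}"

definition vecF :: "('m::finite \<Rightarrow> real^'n \<Rightarrow> real^'n) \<Rightarrow> real^'n \<Rightarrow> real^'n \<Rightarrow> real^'m" where
  "vecF F x u = (\<chi> l. inner (F l x) u)"

definition nonneg_orthant :: "(real^'m::finite) set" where
  "nonneg_orthant = {v. \<forall>l. v $ l \<ge> 0}"

definition SolW :: "('m::finite \<Rightarrow> real^'n \<Rightarrow> real^'n) \<Rightarrow> (real^'n) set \<Rightarrow> (real^'n) set" where
  "SolW F K = {x \<in> K. \<forall>y\<in>K. vecF F x (x - y) \<notin> interior nonneg_orthant}"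

definition simplex_Delta :: "('m::finite \<Rightarrow> real) set" where
  "simplex_Delta = {\<xi>. (\<forall>l. \<xi> l \<ge> 0) \<and> (\<Sum>l\<in>UNIV. \<xi> l) = 1}"

definition Fxi :: "('m::finite \<Rightarrow> 'a \<Rightarrow> 'a::real_vector) \<Rightarrow> ('m \<Rightarrow> real) \<Rightarrow> 'a \<Rightarrow> 'a" where
  "Fxi F \<xi> x = (\<Sum>l\<in>UNIV. \<xi> l *\<^sub>R F l x)"

definition monotone_on_set :: "('a::real_inner \<Rightarrow> 'a) \<Rightarrow> 'a set \<Rightarrow> bool" where
  "monotone_on_set G K \<longleftrightarrow> (\<forall>x\<in>K. \<forall>y\<in>K. inner (G y - G x) (y - x) \<ge> 0)"

end

theory Submission
  imports Defs
begin


lemma sol_minty1: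
  fixes G :: "'a::real_inner \<Rightarrow> 'a"
  assumes "monotone_on_set G K" "x \<in> Sol G K" "y \<in> K"
  shows "inner (G y) (y - x) \<ge> 0"
proof -
  have "x \<in> K" "inner (G x) (y - x) \<ge> 0" using assms(2,3) by (auto simp: Sol_def)
  moreover have "inner (G y - G x) (y - x) \<ge> 0" using assms(1,3) \<open>x\<in>K\<close> by (auto simp: monotone_on_set_def)
  ultimately show ?thesis by (simp add: inner_diff_left)
qed

lemma sol_minty2:
  fixes G :: "'a::real_inner \<Rightarrow> 'a"
  assumes "convex K" "continuous_on K G" "x \<in> K" "\<And>y. y \<in> K \<Longrightarrow> inner (G y) (y - x) \<ge> 0"
  shows "x \<in> Sol G K"
  unfolding Sol_def
proof (intro CollectI conjI ballI)
  show "x \<in> K" by fact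
  fix y assume y: "y \<in> K"
  define f where "f = (\<lambda>t. inner (G (x + t *\<^sub>R (y - x))) (y - x))"
  have mem: "x + t *\<^sub>R (y - x) \<in> K" if "t \<in> {0..1}" for t
  proof -
    have "x + t *\<^sub>R (y - x) = (1 - t) *\<^sub>R x + t *\<^sub>R y" by (simp add: algebra_simps)
    then show ?thesis using convexD_alt[OF assms(1) assms(3) y, of t] that by auto
  qed
  have cont: "continuous_on {0..1} f"
    unfolding f_def
    by (intro continuous_intros continuous_on_compose2[OF assms(2)]) (auto intro: mem)
  have cl: "closed {t \<in> {0..1}. 0 \<le> f t}"
    by (rule continuous_on_closed_Collect_le[OF continuous_on_const cont]) auto
  have sub: "{0<..1} \<subseteq> {t \<in> {0..1}. 0 \<le> f t}"
  proof
    fix t :: real assume t: "t \<in> {0<..1}"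
    then have "0 \<le> inner (G (x + t *\<^sub>R (y - x))) (x + t *\<^sub>R (y - x) - x)"
      using assms(4)[OF mem] by auto
    then have "0 \<le> t * f t" by (simp add: f_def inner_scaleR_right)
    with t show "t \<in> {t \<in> {0..1}. 0 \<le> f t}" by (auto simp: zero_le_mult_iff)
  qed
  have "closure {0<..1::real} \<subseteq> {t \<in> {0..1}. 0 \<le> f t}"
    by (rule closure_minimal[OF sub cl])
  moreover have "(0::real) \<in> closure {0<..1}" by simp
  ultimately have "0 \<in> {t \<in> {0..1}. 0 \<le> f t}" by blast
  then have "0 \<le> f 0" by blast
  then show "0 \<le> inner (G x) (y - x)" by (simp add: f_def)
qed

lemma sol_HS:
  fixes G :: "'a::euclidean_space \<Rightarrow> 'a"
  assumes "compact K" "convex K" "K \<noteq> {}" "continuous_on K G"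
  shows "Sol G K \<noteq> {}"
proof -
  have clK: "closed K" using assms(1) compact_imp_closed by auto
  have cont: "continuous_on K (\<lambda>x. closest_point K (x - G x))"
    by (intro continuous_on_compose2[OF continuous_on_closest_point[OF assms(2) clK assms(3)]] continuous_intros assms(4)) auto
  obtain x where x: "x \<in> K" "closest_point K (x - G x) = x"
    using brouwer[OF assms(1-3) cont] closest_point_in_set[OF clK assms(3)] by blast
  have "x \<in> Sol G K"
    unfolding Sol_def
  proof (intro CollectI conjI ballI)
    fix y assume "y \<in> K"
    from closest_point_dot[OF assms(2) clK this, of "x - G x"] x(2)
    show "0 \<le> inner (G x) (y - x)" by (simp add: inner_diff_left inner_minus_left)
  qed (fact x)
  then show ?thesis by auto
qed

lemma sol_local_global:
  fixes G :: "'a::real_inner \<Rightarrow> 'a"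
  assumes "convex K" "x \<in> Sol G (K \<inter> cball 0 R)" "norm x < R"
  shows "x \<in> Sol G K"
  unfolding Sol_def
proof (intro CollectI conjI ballI)
  show xK: "x \<in> K" using assms(2) by (auto simp: Sol_def)
  fix y assume y: "y \<in> K"
  define s where "s = min 1 ((R - norm x) / (norm (y - x) + 1))"
  have "0 < (R - norm x) / (norm (y - x) + 1)" using assms(3)
    by (intro divide_pos_pos) (auto simp: add_nonneg_pos)
  then have s0: "0 < s" "s \<le> 1" by (auto simp: s_def)
  have "norm (x + s *\<^sub>R (y - x)) \<le> norm x + s * norm (y - x)"
    using norm_triangle_ineq[of x "s *\<^sub>R (y - x)"] s0 by simp
  also have "s * norm (y - x) \<le> ((R - norm x) / (norm (y - x) + 1)) * norm (y - x)"
    by (rule mult_right_mono) (auto simp: s_def)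
  also have "\<dots> \<le> R - norm x"
    using assms(3) by (simp add: divide_simps add_nonneg_pos not_less)
  finally have nz: "norm (x + s *\<^sub>R (y - x)) \<le> R" by simp
  have "x + s *\<^sub>R (y - x) = (1 - s) *\<^sub>R x + s *\<^sub>R y" by (simp add: algebra_simps)
  then have "x + s *\<^sub>R (y - x) \<in> K" using convexD_alt[OF assms(1) xK y, of s] s0 by auto
  with nz have "x + s *\<^sub>R (y - x) \<in> K \<inter> cball 0 R" by simp
  then have "0 \<le> inner (G x) (x + s *\<^sub>R (y - x) - x)"
    using assms(2) unfolding Sol_def by blast
  then have "0 \<le> s * inner (G x) (y - x)" by (simp add: inner_scaleR_right)
  with s0 show "0 \<le> inner (G x) (y - x)" by (simp add: zero_le_mult_iff)
qed



definition recc :: "'a::real_vector set \<Rightarrow> 'a \<Rightarrow> bool" where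
  "recc K d \<longleftrightarrow> (\<forall>x\<in>K. \<forall>t\<ge>0. x + t *\<^sub>R d \<in> K)"

lemma recc_from_point:
  fixes K :: "'a::real_normed_vector set"
  assumes "closed K" "convex K" "a \<in> K" "\<And>s. s \<ge> 0 \<Longrightarrow> a + s *\<^sub>R d \<in> K"
  shows "recc K d"
  unfolding recc_def
proof (intro ballI allI impI)
  fix x t assume x: "x \<in> K" and t: "(t::real) \<ge> 0"
  define th where "th n = t / ((t + 1) + real n)" for n :: nat
  define p where "p n = x + t *\<^sub>R d + th n *\<^sub>R (a - x)" for n
  have "p n \<in> K" for n
  proof -
    have th: "0 \<le> th n" "th n \<le> 1" using t by (auto simp: th_def divide_simps)
    have pos: "real n + t + 1 > 0" using t by simp
    have e: "th n * ((t + 1) + real n) = t" using t by (simp add: th_def)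
    have "(1 - th n) *\<^sub>R x + th n *\<^sub>R (a + ((t + 1) + real n) *\<^sub>R d)
        = (1 - th n) *\<^sub>R x + th n *\<^sub>R a + (th n * ((t + 1) + real n)) *\<^sub>R d"
      by (simp add: scaleR_add_right)
    also have "\<dots> = p n" unfolding e p_def by (simp add: algebra_simps)
    finally have "p n = (1 - th n) *\<^sub>R x + th n *\<^sub>R (a + ((t + 1) + real n) *\<^sub>R d)" ..
    moreover have "a + ((t + 1) + real n) *\<^sub>R d \<in> K" using assms(4) t by simp
    ultimately show ?thesis using convexD_alt[OF assms(2) x, of _ "th n"] th by auto
  qed
  moreover have "th \<longlonglongrightarrow> 0" unfolding th_def
    by (intro tendsto_divide_0[OF tendsto_const] filterlim_at_top_imp_at_infinity
        filterlim_tendsto_add_at_top[OF tendsto_const filterlim_real_sequentially])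
  then have "p \<longlonglongrightarrow> x + t *\<^sub>R d + 0 *\<^sub>R (a - x)" unfolding p_def by (intro tendsto_intros)
  ultimately show "x + t *\<^sub>R d \<in> K"
    using closed_sequentially[OF assms(1)] by fastforce
qed

lemma monotone_on_subset: "monotone_on_set G K \<Longrightarrow> K' \<subseteq> K \<Longrightarrow> monotone_on_set G K'"
  unfolding monotone_on_set_def by blast

lemma sol_exist:
  fixes G :: "'a::euclidean_space \<Rightarrow> 'a"
  assumes K: "closed K" "convex K" "K \<noteq> {}" and cont: "continuous_on K G"
    and mono: "monotone_on_set G K"
    and nobad: "\<not>(\<exists>d. d \<noteq> 0 \<and> recc K d \<and> (\<forall>y\<in>K. inner (G y) d \<le> 0))"
  shows "Sol G K \<noteq> {}"
proof (rule ccontr)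
  assume "\<not> ?thesis" then have empty: "Sol G K = {}" by simp
  obtain a where a: "a \<in> K" using K(3) by blast
  define R where "R n = norm a + real n + 1" for n::nat
  define Kn where "Kn n = K \<inter> cball 0 (R n)" for n
  have aKn: "a \<in> Kn n" for n using a by (auto simp: Kn_def R_def)
  have Kn: "compact (Kn n)" "convex (Kn n)" "Kn n \<noteq> {}" "continuous_on (Kn n) G" for n
    using aKn[of n] K cont unfolding Kn_def
    by (auto intro: closed_Int_compact convex_Int continuous_on_subset)
  have "\<forall>n. \<exists>x. x \<in> Sol G (Kn n)" using sol_HS[OF Kn] by blast
  then obtain x where x: "\<And>n. x n \<in> Sol G (Kn n)" by metis
  have xK: "x n \<in> K" and xn: "norm (x n) \<le> R n" for n
    using x[of n] by (auto simp: Sol_def Kn_def)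
  have xR: "norm (x n) = R n" for n
  proof (rule ccontr)
    assume "norm (x n) \<noteq> R n"
    with xn[of n] have "norm (x n) < R n" by simp
    with sol_local_global[OF K(2), where x="x n" and R="R n" and G=G] x[of n] empty show False
      by (auto simp: Kn_def)
  qed
  have N: "real n + 1 \<le> norm (x n - a)" for n
    using norm_triangle_ineq2[of "x n" a] xR[of n] by (simp add: R_def)
  have Npos: "norm (x n - a) > 0" for n using N[of n]
    by (smt (verit) of_nat_0_le_iff)
  define d where "d n = (1 / norm (x n - a)) *\<^sub>R (x n - a)" for n
  have dS: "d n \<in> sphere 0 1" for n using Npos[of n] by (simp add: d_def)
  obtain d0 r where d0: "d0 \<in> sphere 0 1" "strict_mono r" "(d \<circ> r) \<longlonglongrightarrow> d0"
    using seq_compactE[OF compact_imp_seq_compact[OF compact_sphere] , of d 0 1] dS by blast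
  have rge: "n \<le> r n" for n using seq_suble[OF d0(2)] by simp
  have dr: "(\<lambda>n. d (r n)) \<longlonglongrightarrow> d0" using d0(3) by (simp add: o_def)
  have rec: "recc K d0"
  proof (rule recc_from_point[OF K(1,2) a])
    fix s :: real assume s: "s \<ge> 0"
    have ev: "eventually (\<lambda>n. a + s *\<^sub>R d (r n) \<in> K) sequentially"
      unfolding eventually_sequentially
    proof (intro exI allI impI)
      fix n assume n: "nat \<lceil>s\<rceil> \<le> n"
      have "s \<le> real n" using n by linarith
      also have "\<dots> \<le> real (r n)" using rge[of n] by simp
      also have "\<dots> \<le> norm (x (r n) - a)" using N[of "r n"] by simp
      finally have sN: "s \<le> norm (x (r n) - a)" .
      define th where "th = s / norm (x (r n) - a)"
      have th: "0 \<le> th" "th \<le> 1" using s sN Npos[of "r n"] by (auto simp: th_def divide_simps)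
      have "a + s *\<^sub>R d (r n) = (1 - th) *\<^sub>R a + th *\<^sub>R x (r n)"
        by (simp add: d_def th_def algebra_simps)
      then show "a + s *\<^sub>R d (r n) \<in> K" using convexD_alt[OF K(2) a xK[of "r n"]] th by auto
    qed
    have "(\<lambda>n. a + s *\<^sub>R d (r n)) \<longlonglongrightarrow> a + s *\<^sub>R d0" by (intro tendsto_intros dr)
    then show "a + s *\<^sub>R d0 \<in> K"
      using Lim_in_closed_set[OF K(1) ev] by simp
  qed
  have neg: "inner (G y) d0 \<le> 0" if y: "y \<in> K" for y
  proof -
    define c where "c = \<bar>inner (G y) (y - a)\<bar>"
    have lim1: "(\<lambda>n. inner (G y) (d (r n))) \<longlonglongrightarrow> inner (G y) d0" by (intro tendsto_intros dr)
    have lim2: "(\<lambda>n. c / of_nat n) \<longlonglongrightarrow> (0::real)" by (rule lim_const_over_n)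
    have ev: "eventually (\<lambda>n. inner (G y) (d (r n)) \<le> c / of_nat n) sequentially"
      unfolding eventually_sequentially
    proof (intro exI allI impI)
      fix n assume n: "max 1 (nat \<lceil>norm y\<rceil>) \<le> n"
      have "norm y \<le> real n" using n by linarith
      also have "\<dots> \<le> real (r n)" using rge[of n] by simp
      finally have "norm y \<le> R (r n)" using norm_ge_zero[of a] unfolding R_def by linarith
      then have "y \<in> Kn (r n)" using y by (auto simp: Kn_def)
      then have "inner (G y) (y - x (r n)) \<ge> 0"
        using sol_minty1[OF monotone_on_subset[OF mono] x] by (auto simp: Kn_def)
      then have i1: "inner (G y) (x (r n) - a) \<le> c"
        unfolding c_def by (simp add: inner_diff_right)
      have npos: "real n > 0" using n by simp
      have nN: "real n \<le> norm (x (r n) - a)" using N[of "r n"] rge[of n] by simp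
      have "inner (G y) (d (r n)) = inner (G y) (x (r n) - a) / norm (x (r n) - a)"
        by (simp add: d_def)
      also have "\<dots> \<le> c / norm (x (r n) - a)"
        using i1 Npos[of "r n"] by (simp add: divide_right_mono)
      also have "\<dots> \<le> c / real n"
        using npos nN Npos[of "r n"] by (intro divide_left_mono) (auto simp: c_def)
      finally show "inner (G y) (d (r n)) \<le> c / of_nat n" by simp
    qed
    show ?thesis using tendsto_le[OF trivial_limit_sequentially lim2 lim1 ev] by simp
  qed
  have "d0 \<noteq> 0" using d0(1) by auto
  with rec neg nobad show False by blast
qed

lemma sol_unbounded:
  fixes G :: "'a::real_inner \<Rightarrow> 'a"
  assumes "convex K" "continuous_on K G" "monotone_on_set G K" "x \<in> Sol G K"
    "recc K d" "d \<noteq> 0" "\<forall>y\<in>K. inner (G y) d \<le> 0"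
  shows "\<not> bounded (Sol G K)"
proof
  have xK: "x \<in> K" using assms(4) by (simp add: Sol_def)
  have mem: "x + t *\<^sub>R d \<in> Sol G K" if t: "t \<ge> 0" for t
  proof (rule sol_minty2[OF assms(1,2)])
    show "x + t *\<^sub>R d \<in> K" using assms(5) xK t by (simp add: recc_def)
    fix y assume y: "y \<in> K"
    have "inner (G y) (y - x) \<ge> 0" using sol_minty1[OF assms(3,4) y] .
    moreover have "t * inner (G y) d \<le> 0" using t assms(7) y by (simp add: mult_nonneg_nonpos)
    ultimately show "0 \<le> inner (G y) (y - (x + t *\<^sub>R d))"
      by (simp add: inner_diff_right inner_add_right)
  qed
  assume "bounded (Sol G K)"
  then obtain B where B: "\<And>z. z \<in> Sol G K \<Longrightarrow> norm z \<le> B" by (auto simp: bounded_iff)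
  define t where "t = (\<bar>B\<bar> + norm x + 1) / norm d"
  have t: "t \<ge> 0" using assms(6) by (simp add: t_def)
  have "norm (t *\<^sub>R d) = \<bar>B\<bar> + norm x + 1" using assms(6) t by (simp add: t_def)
  then have "norm (x + t *\<^sub>R d) \<ge> \<bar>B\<bar> + 1"
    using norm_triangle_ineq2[of "t *\<^sub>R d" "- x"] by (simp add: add.commute)
  with B[OF mem[OF t]] show False by simp
qed



definition pathG :: "('a::real_vector \<Rightarrow> 'a) \<Rightarrow> ('a \<Rightarrow> 'a) \<Rightarrow> real \<Rightarrow> 'a \<Rightarrow> 'a" where
  "pathG G0 G1 t x = (1 - t) *\<^sub>R G0 x + t *\<^sub>R G1 x"

lemma pathG_cont:
  fixes G0 :: "'a::real_normed_vector \<Rightarrow> 'a"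
  assumes "continuous_on K G0" "continuous_on K G1"
  shows "continuous_on K (pathG G0 G1 t)"
  unfolding pathG_def by (intro continuous_on_add continuous_on_scaleR continuous_on_const assms)

lemma pathG_mono:
  fixes G0 :: "'a::real_inner \<Rightarrow> 'a"
  assumes "monotone_on_set G0 K" "monotone_on_set G1 K" "t \<in> {0..1}"
  shows "monotone_on_set (pathG G0 G1 t) K"
  unfolding monotone_on_set_def
proof (intro ballI)
  fix x y assume xy: "x \<in> K" "y \<in> K"
  have a: "inner (G0 y - G0 x) (y - x) \<ge> 0" "inner (G1 y - G1 x) (y - x) \<ge> 0"
    using assms(1,2) xy by (auto simp: monotone_on_set_def)
  have "inner (pathG G0 G1 t y - pathG G0 G1 t x) (y - x)
      = (1 - t) * inner (G0 y - G0 x) (y - x) + t * inner (G1 y - G1 x) (y - x)"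
    by (simp add: pathG_def inner_diff_left inner_add_left algebra_simps)
  also have "\<dots> \<ge> 0" using a assms(3) by (auto intro!: add_nonneg_nonneg mult_nonneg_nonneg)
  finally show "0 \<le> inner (pathG G0 G1 t y - pathG G0 G1 t x) (y - x)" .
qed

lemma sol_convex:
  fixes G :: "'a::real_inner \<Rightarrow> 'a"
  assumes "convex K" "continuous_on K G" "monotone_on_set G K"
  shows "convex (Sol G K)"
  unfolding convex_def
proof (intro ballI allI impI)
  fix x y u v assume xy: "x \<in> Sol G K" "y \<in> Sol G K" and uv: "(0::real) \<le> u" "0 \<le> v" "u + v = 1"
  have K: "x \<in> K" "y \<in> K" using xy by (auto simp: Sol_def)
  show "u *\<^sub>R x + v *\<^sub>R y \<in> Sol G K"
  proof (rule sol_minty2[OF assms(1,2)])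
    show "u *\<^sub>R x + v *\<^sub>R y \<in> K" using convexD[OF assms(1) K uv] .
    fix z assume z: "z \<in> K"
    have "z - (u *\<^sub>R x + v *\<^sub>R y) = u *\<^sub>R (z - x) + v *\<^sub>R (z - y)"
      using uv(3) by (simp add: algebra_simps scaleR_add_left[symmetric])
    then have "inner (G z) (z - (u *\<^sub>R x + v *\<^sub>R y)) = u * inner (G z) (z - x) + v * inner (G z) (z - y)"
      by (simp add: inner_add_right)
    also have "\<dots> \<ge> 0" using sol_minty1[OF assms(3) xy(1) z] sol_minty1[OF assms(3) xy(2) z] uv
      by (auto intro!: add_nonneg_nonneg mult_nonneg_nonneg)
    finally show "0 \<le> inner (G z) (z - (u *\<^sub>R x + v *\<^sub>R y))" .
  qed
qed

lemma graph_compact: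
  fixes G0 :: "'a::euclidean_space \<Rightarrow> 'a"
  assumes "closed K" "continuous_on K G0" "continuous_on K G1" "bounded B"
    "\<And>t. t \<in> {0..1} \<Longrightarrow> Sol (pathG G0 G1 t) K \<subseteq> B"
  shows "compact {p. fst p \<in> {0..1} \<and> snd p \<in> Sol (pathG G0 G1 (fst p)) K}"
proof -
  define phi where "phi y p = inner ((1 - fst p) *\<^sub>R G0 (snd p) + fst p *\<^sub>R G1 (snd p)) (y - snd p)"
    for y and p :: "real \<times> 'a"
  have eq: "{p. fst p \<in> {0..1} \<and> snd p \<in> Sol (pathG G0 G1 (fst p)) K}
     = ({0..1} \<times> K) \<inter> (\<Inter>y\<in>K. {p \<in> {0..1} \<times> K. 0 \<le> phi y p})"
    by (auto simp: Sol_def pathG_def phi_def)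
  have c0: "continuous_on ({0..1} \<times> K) (\<lambda>p. G0 (snd p))"
    by (rule continuous_on_compose2[OF assms(2) continuous_on_snd]) auto
  have c1: "continuous_on ({0..1} \<times> K) (\<lambda>p. G1 (snd p))"
    by (rule continuous_on_compose2[OF assms(3) continuous_on_snd]) auto
  have cl: "closed {p \<in> {0..1} \<times> K. 0 \<le> phi y p}" for y
    unfolding phi_def
    by (rule continuous_on_closed_Collect_le) (auto intro!: continuous_intros c0 c1 closed_Times assms(1))
  have "closed ({0..1::real} \<times> K)" by (intro closed_Times assms(1) closed_atLeastAtMost)
  then have "closed {p. fst p \<in> {0..1} \<and> snd p \<in> Sol (pathG G0 G1 (fst p)) K}"
    unfolding eq using cl by (intro closed_Int closed_INT) auto
  moreover have "bounded {p. fst p \<in> {0..1} \<and> snd p \<in> Sol (pathG G0 G1 (fst p)) K}"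
  proof (rule bounded_subset)
    show "bounded ({0..1::real} \<times> B)" by (intro bounded_Times assms(4) bounded_closed_interval)
    show "{p. fst p \<in> {0..1} \<and> snd p \<in> Sol (pathG G0 G1 (fst p)) K} \<subseteq> {0..1} \<times> B"
      using assms(5) by (fastforce simp: mem_Times_iff subset_iff)
  qed
  ultimately show ?thesis by (simp add: compact_eq_bounded_closed)
qed



lemma path_nonempty:
  fixes G0 :: "'a::euclidean_space \<Rightarrow> 'a"
  assumes K: "closed K" "convex K" "K \<noteq> {}"
    and c: "continuous_on K G0" "continuous_on K G1"
    and m: "monotone_on_set G0 K" "monotone_on_set G1 K"
    and B: "bounded B" "\<And>t. t \<in> {0..1} \<Longrightarrow> Sol (pathG G0 G1 t) K \<subseteq> B"
    and ne0: "Sol (pathG G0 G1 0) K \<noteq> {}"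
    and t: "t \<in> {0..1}"
  shows "Sol (pathG G0 G1 t) K \<noteq> {}"
proof -
  define Gr where "Gr = {p. fst p \<in> {0..1} \<and> snd p \<in> Sol (pathG G0 G1 (fst p)) K}"
  have cGr: "compact Gr" unfolding Gr_def by (rule graph_compact[OF K(1) c B])
  define T where "T = fst ` Gr"
  have clT: "closed T" unfolding T_def
    by (rule compact_imp_closed[OF compact_continuous_image[OF continuous_on_fst[OF continuous_on_id] cGr]])
  define Bad where "Bad = {p. fst p \<in> {0..1} \<and> norm (snd p) = 1 \<and> recc K (snd p)
      \<and> (\<forall>y\<in>K. inner ((1 - fst p) *\<^sub>R G0 y + fst p *\<^sub>R G1 y) (snd p) \<le> 0)}"
  have eqBad: "Bad = ({0..1} \<times> sphere 0 1)
     \<inter> (\<Inter>x\<in>K. \<Inter>s\<in>{0..}. (\<lambda>p. x + s *\<^sub>R snd p) -` K)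
     \<inter> (\<Inter>y\<in>K. {p. inner ((1 - fst p) *\<^sub>R G0 y + fst p *\<^sub>R G1 y) (snd p) \<le> 0})"
    by (auto simp: Bad_def recc_def)
  have "closed Bad" unfolding eqBad
    by (intro closed_Int closed_Times closed_atLeastAtMost closed_sphere closed_INT ballI
        continuous_closed_vimage K(1) closed_Collect_le continuous_intros)
  moreover have "bounded Bad"
    by (rule bounded_subset[of "{0..1} \<times> cball 0 1"])
      (auto intro: bounded_Times simp: Bad_def mem_Times_iff)
  ultimately have "compact Bad" by (simp add: compact_eq_bounded_closed)
  define D where "D = fst ` Bad"
  have clD: "closed D" unfolding D_def
    by (rule compact_imp_closed[OF compact_continuous_image[OF continuous_on_fst[OF continuous_on_id] \<open>compact Bad\<close>]])
  have TD: "s \<in> T \<longleftrightarrow> s \<notin> D" if s: "s \<in> {0..1}" for s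
  proof
    assume "s \<in> T"
    then obtain x where x: "x \<in> Sol (pathG G0 G1 s) K" by (auto simp: T_def Gr_def)
    show "s \<notin> D"
    proof
      assume "s \<in> D"
      then obtain d where d: "norm d = 1" "recc K d"
        "\<forall>y\<in>K. inner ((1 - s) *\<^sub>R G0 y + s *\<^sub>R G1 y) d \<le> 0"
        by (auto simp: D_def Bad_def)
      have "\<not> bounded (Sol (pathG G0 G1 s) K)"
        by (rule sol_unbounded[OF K(2) pathG_cont[OF c] pathG_mono[OF m s] x d(2)])
          (use d in \<open>auto simp: pathG_def\<close>)
      with bounded_subset[OF B(1) B(2)[OF s]] show False by simp
    qed
  next
    assume "s \<notin> D"
    show "s \<in> T"
    proof (rule ccontr)
      assume "s \<notin> T"
      then have "Sol (pathG G0 G1 s) K = {}" using s by (auto simp: T_def Gr_def image_iff)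
      then obtain d where d: "d \<noteq> 0" "recc K d" "\<forall>y\<in>K. inner (pathG G0 G1 s y) d \<le> 0"
        using sol_exist[OF K pathG_cont[OF c] pathG_mono[OF m s]] by blast
      define e where "e = (1 / norm d) *\<^sub>R d"
      have "norm e = 1" using d(1) by (simp add: e_def)
      moreover have "recc K e" using d(2) d(1) unfolding recc_def e_def
        by (auto simp: scaleR_scaleR)
      moreover have "\<forall>y\<in>K. inner ((1 - s) *\<^sub>R G0 y + s *\<^sub>R G1 y) e \<le> 0"
        using d(3) by (auto simp: e_def pathG_def intro!: divide_nonpos_nonneg)
      ultimately have "(s, e) \<in> Bad" using s by (simp add: Bad_def)
      then have "s \<in> D" unfolding D_def by force
      with \<open>s \<notin> D\<close> show False by simp
    qed
  qed
  have "0 \<in> T"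
  proof -
    obtain x where "x \<in> Sol (pathG G0 G1 0) K" using ne0 by blast
    then have "(0, x) \<in> Gr" by (simp add: Gr_def)
    then show ?thesis unfolding T_def by (rule image_eqI[rotated]) simp
  qed
  have "D \<inter> {0..1} = {}"
  proof (rule ccontr)
    assume "D \<inter> {0..1} \<noteq> {}"
    moreover have "{0..1} \<subseteq> T \<union> D" "T \<inter> D \<inter> {0..1} = {}"
      using TD by auto
    moreover have "(0::real) \<in> T \<inter> {0..1}" using \<open>0 \<in> T\<close> by simp
    then have "T \<inter> {0..1} \<noteq> {}" by blast
    ultimately show False
      using connected_Icc[of "0::real" 1] clT clD unfolding connected_closed by blast
  qed
  then show ?thesis using TD[OF t] t by (auto simp: T_def Gr_def)
qed

lemma path_connected:
  fixes G0 :: "'a::euclidean_space \<Rightarrow> 'a"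
  assumes K: "closed K" "convex K"
    and c: "continuous_on K G0" "continuous_on K G1"
    and m: "monotone_on_set G0 K" "monotone_on_set G1 K"
    and B: "bounded B" "\<And>t. t \<in> {0..1} \<Longrightarrow> Sol (pathG G0 G1 t) K \<subseteq> B"
    and ne: "\<And>t. t \<in> {0..1} \<Longrightarrow> Sol (pathG G0 G1 t) K \<noteq> {}"
  shows "connected (\<Union>t\<in>{0..1}. Sol (pathG G0 G1 t) K)"
  unfolding connected_closed
proof
  define U where "U = (\<Union>t\<in>{0..1}. Sol (pathG G0 G1 t) K)"
  assume "\<exists>A B. closed A \<and> closed B \<and> (\<Union>t\<in>{0..1}. Sol (pathG G0 G1 t) K) \<subseteq> A \<union> B \<and>
        A \<inter> B \<inter> (\<Union>t\<in>{0..1}. Sol (pathG G0 G1 t) K) = {} \<and>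
        A \<inter> (\<Union>t\<in>{0..1}. Sol (pathG G0 G1 t) K) \<noteq> {} \<and> B \<inter> (\<Union>t\<in>{0..1}. Sol (pathG G0 G1 t) K) \<noteq> {}"
  then obtain A A' where AA: "closed A" "closed A'" "U \<subseteq> A \<union> A'" "A \<inter> A' \<inter> U = {}"
    "A \<inter> U \<noteq> {}" "A' \<inter> U \<noteq> {}" unfolding U_def by blast
  define S where "S t = Sol (pathG G0 G1 t) K" for t
  have SU: "t \<in> {0..1} \<Longrightarrow> S t \<subseteq> U" for t by (auto simp: S_def U_def)
  have alt: "S t \<subseteq> A \<or> S t \<subseteq> A'" if t: "t \<in> {0..1}" for t
  proof -
    have "connected (S t)" unfolding S_def
      by (intro convex_connected sol_convex K(2) pathG_cont[OF c] pathG_mono[OF m t])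
    then have "\<not> (A \<inter> S t \<noteq> {} \<and> A' \<inter> S t \<noteq> {})"
      using AA SU[OF t] unfolding connected_closed by blast
    then show ?thesis using AA(3) SU[OF t] by blast
  qed
  define Gr where "Gr = {p. fst p \<in> {0..1} \<and> snd p \<in> Sol (pathG G0 G1 (fst p)) K}"
  have cGr: "compact Gr" unfolding Gr_def by (rule graph_compact[OF K(1) c B])
  define TA where "TA = fst ` (Gr \<inter> (UNIV \<times> A))"
  define TB where "TB = fst ` (Gr \<inter> (UNIV \<times> A'))"
  have clTA: "closed TA" unfolding TA_def
    by (rule compact_imp_closed[OF compact_continuous_image[OF continuous_on_fst[OF continuous_on_id]
        compact_Int_closed[OF cGr closed_Times[OF closed_UNIV AA(1)]]]])
  have clTB: "closed TB" unfolding TB_def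
    by (rule compact_imp_closed[OF compact_continuous_image[OF continuous_on_fst[OF continuous_on_id]
        compact_Int_closed[OF cGr closed_Times[OF closed_UNIV AA(2)]]]])
  have memA: "t \<in> TA \<longleftrightarrow> (\<exists>x. x \<in> S t \<and> x \<in> A)" if t: "t \<in> {0..1}" for t
  proof
    assume "t \<in> TA"
    then obtain p where "p \<in> Gr" "snd p \<in> A" "t = fst p" by (auto simp: TA_def)
    then show "\<exists>x. x \<in> S t \<and> x \<in> A" by (auto simp: Gr_def S_def)
  next
    assume "\<exists>x. x \<in> S t \<and> x \<in> A"
    then obtain x where "x \<in> S t" "x \<in> A" by blast
    then have "(t, x) \<in> Gr \<inter> (UNIV \<times> A)" using t by (auto simp: Gr_def S_def)
    then show "t \<in> TA" unfolding TA_def by (rule image_eqI[rotated]) simp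
  qed
  have memB: "t \<in> TB \<longleftrightarrow> (\<exists>x. x \<in> S t \<and> x \<in> A')" if t: "t \<in> {0..1}" for t
  proof
    assume "t \<in> TB"
    then obtain p where "p \<in> Gr" "snd p \<in> A'" "t = fst p" by (auto simp: TB_def)
    then show "\<exists>x. x \<in> S t \<and> x \<in> A'" by (auto simp: Gr_def S_def)
  next
    assume "\<exists>x. x \<in> S t \<and> x \<in> A'"
    then obtain x where "x \<in> S t" "x \<in> A'" by blast
    then have "(t, x) \<in> Gr \<inter> (UNIV \<times> A')" using t by (auto simp: Gr_def S_def)
    then show "t \<in> TB" unfolding TB_def by (rule image_eqI[rotated]) simp
  qed
  have cov: "{0..1} \<subseteq> TA \<union> TB"
  proof
    fix t :: real assume t: "t \<in> {0..1}"
    then obtain x where "x \<in> S t" using ne by (auto simp: S_def)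
    then show "t \<in> TA \<union> TB" using alt[OF t] memA[OF t] memB[OF t] by blast
  qed
  have disj: "TA \<inter> TB \<inter> {0..1} = {}"
  proof (rule ccontr)
    assume "TA \<inter> TB \<inter> {0..1} \<noteq> {}"
    then obtain t where t: "t \<in> {0..1}" "t \<in> TA" "t \<in> TB" by blast
    then obtain x y where "x \<in> S t" "x \<in> A" "y \<in> S t" "y \<in> A'" using memA memB by blast
    then show False using alt[OF t(1)] AA(4) SU[OF t(1)] by blast
  qed
  have neA: "TA \<inter> {0..1} \<noteq> {}"
  proof -
    obtain x where "x \<in> A" "x \<in> U" using AA(5) by blast
    then obtain t where "t \<in> {0..1}" "x \<in> S t" by (auto simp: U_def S_def)
    then show ?thesis using memA \<open>x \<in> A\<close> by blast
  qed
  have neB: "TB \<inter> {0..1} \<noteq> {}"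
  proof -
    obtain x where "x \<in> A'" "x \<in> U" using AA(6) by blast
    then obtain t where "t \<in> {0..1}" "x \<in> S t" by (auto simp: U_def S_def)
    then show ?thesis using memB \<open>x \<in> A'\<close> by blast
  qed
  show False
    using connected_Icc[of "0::real" 1] clTA clTB cov disj neA neB unfolding connected_closed by blast
qed



lemma interior_orthant: "interior (nonneg_orthant :: (real^'m::finite) set) = {v. \<forall>l. 0 < v $ l}"
proof
  show "interior nonneg_orthant \<subseteq> {v::real^'m. \<forall>l. 0 < v $ l}"
  proof
    fix v :: "real^'m" assume "v \<in> interior nonneg_orthant"
    then obtain e where e: "e > 0" "ball v e \<subseteq> nonneg_orthant" by (meson mem_interior)
    show "v \<in> {v. \<forall>l. 0 < v $ l}"
    proof (intro CollectI allI)
      fix l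
      have "v - (e/2) *\<^sub>R axis l 1 \<in> ball v e" using e(1) by (simp add: dist_norm)
      then have "v - (e/2) *\<^sub>R axis l 1 \<in> nonneg_orthant" using e(2) by blast
      then have "0 \<le> (v - (e/2) *\<^sub>R axis l 1) $ l" unfolding nonneg_orthant_def by blast
      then show "0 < v $ l" using e(1) by simp
    qed
  qed
next
  have "open {v::real^'m. \<forall>l. 0 < v $ l}"
  proof -
    have "{v::real^'m. \<forall>l. 0 < v $ l} = (\<Inter>l. {v. v $ l > 0})" by auto
    then show ?thesis by (simp add: open_INT open_halfspace_component_gt_cart)
  qed
  then show "{v::real^'m. \<forall>l. 0 < v $ l} \<subseteq> interior nonneg_orthant"
    by (rule interior_maximal[rotated]) (auto simp: nonneg_orthant_def less_imp_le)
qed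

lemma Fxi_path:
  "Fxi F (\<lambda>l. (1 - t) * \<xi>0 l + t * \<xi> l) = pathG (Fxi F \<xi>0) (Fxi F \<xi>) t"
  by (rule ext) (simp add: Fxi_def pathG_def scaleR_add_left sum.distrib scaleR_sum_right)

lemma simplex_path:
  assumes "\<xi>0 \<in> simplex_Delta" "\<xi> \<in> simplex_Delta" "t \<in> {0..1::real}"
  shows "(\<lambda>l. (1 - t) * \<xi>0 l + t * \<xi> l) \<in> simplex_Delta"
  using assms by (auto simp: simplex_Delta_def sum.distrib sum_distrib_left[symmetric])

lemma Fxi_cont:
  fixes F :: "'m::finite \<Rightarrow> 'a::real_normed_vector \<Rightarrow> 'a"
  assumes "\<And>l. continuous_on K (F l)"
  shows "continuous_on K (Fxi F \<xi>)"
  unfolding Fxi_def by (intro continuous_on_sum continuous_on_scaleR continuous_on_const assms)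

lemma Fxi_mono:
  fixes F :: "'m::finite \<Rightarrow> 'a::real_inner \<Rightarrow> 'a"
  assumes "\<And>l. monotone_on_set (F l) K" "\<xi> \<in> simplex_Delta"
  shows "monotone_on_set (Fxi F \<xi>) K"
  unfolding monotone_on_set_def
proof (intro ballI)
  fix x y assume xy: "x \<in> K" "y \<in> K"
  have "inner (Fxi F \<xi> y - Fxi F \<xi> x) (y - x) = (\<Sum>l\<in>UNIV. \<xi> l * inner (F l y - F l x) (y - x))"
    by (simp add: Fxi_def sum_subtractf[symmetric] scaleR_diff_right[symmetric] inner_sum_left
        inner_diff_left)
  also have "\<dots> \<ge> 0"
    using assms xy by (intro sum_nonneg mult_nonneg_nonneg) (auto simp: simplex_Delta_def monotone_on_set_def)
  finally show "0 \<le> inner (Fxi F \<xi> y - Fxi F \<xi> x) (y - x)" .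
qed

lemma Sol_sub_SolW:
  fixes F :: "'m::finite \<Rightarrow> real^'n \<Rightarrow> real^'n"
  assumes "\<xi> \<in> simplex_Delta"
  shows "Sol (Fxi F \<xi>) K \<subseteq> SolW F K"
proof
  fix x assume x: "x \<in> Sol (Fxi F \<xi>) K"
  show "x \<in> SolW F K"
    unfolding SolW_def
  proof (intro CollectI conjI ballI)
    show "x \<in> K" using x by (simp add: Sol_def)
    fix y assume y: "y \<in> K"
    show "vecF F x (x - y) \<notin> interior nonneg_orthant"
    proof
      assume "vecF F x (x - y) \<in> interior nonneg_orthant"
      then have pos: "\<And>l. 0 < inner (F l x) (x - y)" by (simp add: interior_orthant vecF_def)
      have "\<exists>l0. \<xi> l0 > 0"
      proof (rule ccontr)
        assume "\<not> ?thesis"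
        then have "\<forall>l. \<xi> l = 0" using assms unfolding simplex_Delta_def by (metis antisym not_less mem_Collect_eq)
        then show False using assms by (simp add: simplex_Delta_def)
      qed
      then obtain l0 where l0: "\<xi> l0 > 0" by blast
      have "0 < (\<Sum>l\<in>UNIV. \<xi> l * inner (F l x) (x - y))"
        using assms l0 pos by (intro sum_pos2[where i=l0]) (auto simp: simplex_Delta_def less_imp_le)
      moreover have "inner (Fxi F \<xi> x) (y - x) = - (\<Sum>l\<in>UNIV. \<xi> l * inner (F l x) (x - y))"
      proof -
        have "inner (Fxi F \<xi> x) (y - x) = (\<Sum>l\<in>UNIV. \<xi> l * inner (F l x) (y - x))"
          by (simp add: Fxi_def inner_sum_left)
        also have "\<dots> = (\<Sum>l\<in>UNIV. - (\<xi> l * inner (F l x) (x - y)))"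
          by (intro sum.cong refl) (simp add: inner_diff_right algebra_simps)
        finally show ?thesis by (simp add: sum_negf)
      qed
      moreover have "inner (Fxi F \<xi> x) (y - x) \<ge> 0" using x y by (simp add: Sol_def)
      ultimately show False by simp
    qed
  qed
qed



lemma SolW_sub:
  fixes F :: "'m::finite \<Rightarrow> real^'n \<Rightarrow> real^'n"
  assumes x: "x \<in> SolW F K" and cK: "convex K"
  shows "\<exists>\<xi>\<in>simplex_Delta. x \<in> Sol (Fxi F \<xi>) K"
proof -
  have xK: "x \<in> K" using x by (simp add: SolW_def)
  define C where "C = (\<lambda>y. vecF F x (x - y)) ` K"
  define P where "P = {v::real^'m. \<forall>l. 0 < v $ l}"
  define one :: "real^'m" where "one = (\<chi> j. 1)"
  have cC: "convex C" unfolding C_def convex_alt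
  proof (intro ballI allI impI)
    fix c1 c2 u assume c: "c1 \<in> (\<lambda>y. vecF F x (x - y)) ` K" "c2 \<in> (\<lambda>y. vecF F x (x - y)) ` K"
      and u: "0 \<le> u \<and> u \<le> (1::real)"
    then obtain y1 y2 where y: "y1 \<in> K" "y2 \<in> K" "c1 = vecF F x (x - y1)" "c2 = vecF F x (x - y2)" by blast
    have "(1 - u) *\<^sub>R c1 + u *\<^sub>R c2 = vecF F x (x - ((1 - u) *\<^sub>R y1 + u *\<^sub>R y2))"
      unfolding y by (simp add: vecF_def vec_eq_iff inner_diff_right inner_add_right algebra_simps)
    moreover have "(1 - u) *\<^sub>R y1 + u *\<^sub>R y2 \<in> K" using convexD_alt[OF cK y(1,2)] u by auto
    ultimately show "(1 - u) *\<^sub>R c1 + u *\<^sub>R c2 \<in> (\<lambda>y. vecF F x (x - y)) ` K" by blast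
  qed
  have cP: "convex P"
  proof -
    have "P = (\<Inter>l. {v. inner (axis l 1) v > 0})" by (auto simp: P_def inner_axis')
    then show ?thesis by (simp add: convex_INT convex_halfspace_gt)
  qed
  have neC: "C \<noteq> {}" using xK by (auto simp: C_def)
  have oneP: "one \<in> P" by (simp add: one_def P_def)
  have disj: "C \<inter> P = {}"
    using x interior_orthant by (auto simp: C_def P_def SolW_def)
  obtain a b where ab: "a \<noteq> 0" "\<forall>c\<in>C. inner a c \<le> b" "\<forall>p\<in>P. inner a p \<ge> b"
    using separating_hyperplane_sets[OF cC cP neC _ disj] oneP by blast
  define S where "S = (\<Sum>l\<in>UNIV. a $ l)"
  have inner_one: "inner a (c *\<^sub>R one) = c * S" for c by (simp add: one_def S_def inner_vec_def sum_distrib_left mult.commute)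
  have anon: "a $ l \<ge> 0" for l
  proof (rule ccontr)
    assume "\<not> a $ l \<ge> 0"
    then have al: "a $ l < 0" by simp
    define M where "M = (\<bar>S\<bar> + \<bar>b\<bar> + 1) / (- a $ l)"
    have M: "M > 0" using al unfolding M_def by (intro divide_pos_pos) (auto simp: add_nonneg_pos)
    have "one + M *\<^sub>R axis l 1 \<in> P" using M by (auto simp: P_def one_def axis_def add_pos_nonneg)
    then have "b \<le> inner a (one + M *\<^sub>R axis l 1)" using ab(3) by blast
    also have "\<dots> = S + M * a $ l" using inner_one[of 1] by (simp add: inner_add_right inner_axis)
    also have "M * a $ l = - (\<bar>S\<bar> + \<bar>b\<bar> + 1)" using al by (simp add: M_def)
    finally show False by linarith
  qed
  have Spos: "S > 0"
  proof -
    obtain l where "a $ l \<noteq> 0" using ab(1) by (auto simp: vec_eq_iff)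
    then have "a $ l > 0" using anon[of l] by simp
    then show ?thesis unfolding S_def by (intro sum_pos2[where i=l]) (auto simp: anon)
  qed
  have bnp: "b \<le> 0"
  proof (rule ccontr)
    assume "\<not> b \<le> 0"
    then have b: "b > 0" by simp
    define e where "e = b / (2 * S)"
    have "e > 0" using b Spos by (simp add: e_def)
    then have "e *\<^sub>R one \<in> P" by (simp add: P_def one_def)
    then have "b \<le> e * S" using ab(3) inner_one by metis
    also have "e * S = b / 2" using Spos by (simp add: e_def)
    finally show False using b by simp
  qed
  define \<xi> where "\<xi> l = a $ l / S" for l
  have xiD: "\<xi> \<in> simplex_Delta"
    using anon Spos by (simp add: simplex_Delta_def \<xi>_def sum_divide_distrib[symmetric] S_def[symmetric])
  have "x \<in> Sol (Fxi F \<xi>) K"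
    unfolding Sol_def
  proof (intro CollectI conjI ballI)
    show "x \<in> K" by fact
    fix y assume y: "y \<in> K"
    have "inner a (vecF F x (x - y)) \<le> 0" using ab(2) bnp y by (force simp: C_def)
    moreover have "inner a (vecF F x (x - y)) = (\<Sum>l\<in>UNIV. a $ l * inner (F l x) (x - y))"
      by (simp add: inner_vec_def vecF_def)
    moreover have "inner (Fxi F \<xi> x) (y - x) = - (\<Sum>l\<in>UNIV. a $ l * inner (F l x) (x - y)) / S"
    proof -
      have "inner (Fxi F \<xi> x) (y - x) = (\<Sum>l\<in>UNIV. \<xi> l * inner (F l x) (y - x))"
        by (simp add: Fxi_def inner_sum_left)
      also have "\<dots> = (\<Sum>l\<in>UNIV. - (a $ l * inner (F l x) (x - y)) / S)"
        by (intro sum.cong refl) (simp add: \<xi>_def inner_diff_right algebra_simps diff_divide_distrib)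
      finally show ?thesis by (simp add: sum_negf sum_divide_distrib[symmetric])
    qed
    ultimately show "0 \<le> inner (Fxi F \<xi> x) (y - x)" using Spos by (simp add: divide_nonpos_pos)
  qed
  with xiD show ?thesis by blast
qed



theorem theorem3:
  fixes K :: "(real^'n) set" and F :: "'m::finite \<Rightarrow> real^'n \<Rightarrow> real^'n"
  assumes "K \<noteq> {}" and "closed K" and "convex K"
    and "\<And>l. continuous_on K (F l)"
    and "\<And>l. monotone_on_set (F l) K"
    and "bounded (SolW F K)" and "SolW F K \<noteq> {}"
  shows "connected (SolW F K) \<and> (\<forall>\<xi>\<in>simplex_Delta. Sol (Fxi F \<xi>) K \<noteq> {})"
proof -
  obtain x0 where x0: "x0 \<in> SolW F K" using assms(7) by blast
  obtain \<xi>0 where xi0: "\<xi>0 \<in> simplex_Delta" "x0 \<in> Sol (Fxi F \<xi>0) K"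
    using SolW_sub[OF x0 assms(3)] by blast
  have p0: "pathG G0 G1 0 = G0" for G0 G1 :: "real^'n \<Rightarrow> real^'n" by (rule ext) (simp add: pathG_def)
  have p1: "pathG G0 G1 1 = G1" for G0 G1 :: "real^'n \<Rightarrow> real^'n" by (rule ext) (simp add: pathG_def)
  define U where "U \<xi> = (\<Union>t\<in>{0..1}. Sol (pathG (Fxi F \<xi>0) (Fxi F \<xi>) t) K)" for \<xi>
  have facts: "(\<forall>t\<in>{0..1}. Sol (pathG (Fxi F \<xi>0) (Fxi F \<xi>) t) K \<noteq> {}) \<and> connected (U \<xi>)
      \<and> U \<xi> \<subseteq> SolW F K \<and> x0 \<in> U \<xi> \<and> Sol (Fxi F \<xi>) K \<subseteq> U \<xi>"
    if xi: "\<xi> \<in> simplex_Delta" for \<xi>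
  proof -
    have c: "continuous_on K (Fxi F \<xi>0)" "continuous_on K (Fxi F \<xi>)"
      using assms(4) by (auto intro: Fxi_cont)
    have m: "monotone_on_set (Fxi F \<xi>0) K" "monotone_on_set (Fxi F \<xi>) K"
      using Fxi_mono[of F K, OF assms(5)] xi xi0(1) by auto
    have B: "Sol (pathG (Fxi F \<xi>0) (Fxi F \<xi>) t) K \<subseteq> SolW F K" if t: "t \<in> {0..1}" for t
      using Sol_sub_SolW[OF simplex_path[OF xi0(1) xi t], of F K] by (simp add: Fxi_path)
    have ne0: "Sol (pathG (Fxi F \<xi>0) (Fxi F \<xi>) 0) K \<noteq> {}" using xi0(2) by (auto simp: p0)
    have ne: "\<forall>t\<in>{0..1}. Sol (pathG (Fxi F \<xi>0) (Fxi F \<xi>) t) K \<noteq> {}"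
      using path_nonempty[OF assms(2,3,1) c m assms(6) B ne0] by blast
    have "connected (U \<xi>)" unfolding U_def
      using path_connected[OF assms(2,3) c m assms(6) B] ne by blast
    moreover have "U \<xi> \<subseteq> SolW F K" using B unfolding U_def by blast
    moreover have "x0 \<in> U \<xi>" unfolding U_def using xi0(2) by (force simp: p0)
    moreover have "Sol (Fxi F \<xi>) K \<subseteq> U \<xi>" unfolding U_def
    proof
      fix z assume "z \<in> Sol (Fxi F \<xi>) K"
      then have "z \<in> Sol (pathG (Fxi F \<xi>0) (Fxi F \<xi>) 1) K" by (simp add: p1)
      then show "z \<in> (\<Union>t\<in>{0..1}. Sol (pathG (Fxi F \<xi>0) (Fxi F \<xi>) t) K)" by force
    qed
    ultimately show ?thesis using ne by blast
  qed
  have part_b: "\<forall>\<xi>\<in>simplex_Delta. Sol (Fxi F \<xi>) K \<noteq> {}"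
  proof
    fix \<xi> :: "'m \<Rightarrow> real" assume xi: "\<xi> \<in> simplex_Delta"
    then have "Sol (pathG (Fxi F \<xi>0) (Fxi F \<xi>) 1) K \<noteq> {}" using facts[OF xi] by simp
    then show "Sol (Fxi F \<xi>) K \<noteq> {}" by (simp add: p1)
  qed
  have eq: "SolW F K = \<Union>(U ` simplex_Delta)"
  proof
    show "SolW F K \<subseteq> \<Union>(U ` simplex_Delta)"
    proof
      fix z assume "z \<in> SolW F K"
      then obtain \<xi> where "\<xi> \<in> simplex_Delta" "z \<in> Sol (Fxi F \<xi>) K"
        using SolW_sub[OF _ assms(3)] by blast
      then show "z \<in> \<Union>(U ` simplex_Delta)" using facts by blast
    qed
    show "\<Union>(U ` simplex_Delta) \<subseteq> SolW F K" using facts by blast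
  qed
  have "connected (\<Union>(U ` simplex_Delta))"
  proof (rule connected_Union)
    show "\<And>s. s \<in> U ` simplex_Delta \<Longrightarrow> connected s" using facts by blast
    have "x0 \<in> \<Inter>(U ` simplex_Delta)" using facts by blast
    then show "\<Inter>(U ` simplex_Delta) \<noteq> {}" by blast
  qed
  with eq part_b show ?thesis by simp
qed


end
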